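(* (Completeness.) If $t\in SN_{d\beta}$, then $t$ is typable in $\cap J$, i.e. there exist an environment $\Gamma$ and a type $\sigma$ such that $\Gamma\vdash t:\sigma$ is derivable.
   Context: Terms $\mathtt T_J$: $t,u,r ::= x \mid \lambda x.t \mid t(u,y.r)$ ($y$ bound in $r$), up to $\alpha$-equivalence; $\{u/x\}t$ capture-avoiding substitution. List contexts $\mathtt D ::= \Diamond \mid t(u,y.\mathtt D)$. Distant beta: $\mathtt D\langle\lambda x.t\rangle(u,y.r) \mapsto_{d\beta} \{\{u/x\}\mathtt D\langle t\rangle/y\}r$ (variables bound by $\mathtt D$ not free in $u$, $x$ not in $\mathtt D$), $\to_{d\beta}$ its closure under all contexts; $SN_{d\beta}$ the set of terms with no infinite $\to_{d\beta}$-sequence. System $\cap J$: types $\sigma,\tau ::= \alpha \mid \mathcal M\to\sigma$, $\mathcal M=[\sigma_i]_{i\in I}$ a finite possibly empty multiset; $\sqcup$ multiset union; environments map variables to multisets, $\wedge$ pointwise union, $\Gamma;x:\mathcal M$ extension with $x\notin\mathrm{dom}\,\Gamma$. $\mathrm{ch}(\mathcal M)=\mathcal M$ if $\mathcal M\ne[\,]$, $\mathrm{ch}([\,])=[\tau]$ for an arbitrary $\tau$. Rules: (var) $x:[\sigma]\vdash x:\sigma$; (abs) from $\Gamma;x:\mathcal M\vdash t:\sigma$ infer $\Gamma\vdash\lambda x.t:\mathcal M\to\sigma$; (many) from $(\Gamma_i\vdash t:\sigma_i)_{i\in I}$, $I\ne\emptyset$, infer $\wedge_i\Gamma_i\vdash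 t:[\sigma_i]_{i\in I}$; (app) from $\Gamma\vdash t:\mathrm{ch}([\mathcal M_i\to\tau_i]_{i\in I})$, $\Delta\vdash u:\mathrm{ch}(\sqcup_i\mathcal M_i)$, $\Lambda;y:[\tau_i]_{i\in I}\vdash r:\sigma$ infer $\Gamma\wedge\Delta\wedge\Lambda\vdash t(u,y.r):\sigma$. *)

theory Defs
  imports Main "HOL-Library.Multiset"
begin

text \<open>Var i is a de Bruijn index; Lam t binds index 0 in t;
  App t u r represents t(u,y.r), where y is bound (index 0) in r.\<close>

datatype trm = Var nat | Lam trm | App trm trm trm

fun shift :: "nat \<Rightarrow> nat \<Rightarrow> trm \<Rightarrow> trm" where
  "shift n k (Var i) = (if i < k then Var i else Var (i + n))"
| "shift n k (Lam t) = Lam (shift n (Suc k) t)"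
| "shift n k (App t u r) = App (shift n k t) (shift n k u) (shift n (Suc k) r)"

text \<open>subst t k s: capture-avoiding substitution of s for index k in t
  (indices above k are decremented, since the binder of k disappears).\<close>
fun subst :: "trm \<Rightarrow> nat \<Rightarrow> trm \<Rightarrow> trm" where
  "subst (Var i) k s = (if i < k then Var i else if i = k then s else Var (i - 1))"
| "subst (Lam t) k s = Lam (subst t (Suc k) (shift 1 0 s))"
| "subst (App t u r) k s = App (subst t k s) (subst u k s) (subst r (Suc k) (shift 1 0 s))"

datatype lctx = Hole | LApp trm trm lctx

fun plug :: "lctx \<Rightarrow> trm \<Rightarrow> trm" where
  "plug Hole s = s"
| "plug (LApp t u D) s = App t u (plug D s)"

fun depth :: "lctx \<Rightarrow> nat" where
  "depth Hole = 0"
| "depth (LApp t u D) = Suc (depth D)"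

text \<open>D<\<lambda>x.t>(u,y.r) \<mapsto> {{u/x}D<t>/y}r.  In de Bruijn form, u must be shifted
  under the depth D binders of D before being substituted for x.\<close>
inductive dbeta :: "trm \<Rightarrow> trm \<Rightarrow> bool" where
  root: "dbeta (App (plug D (Lam t)) u r)
               (subst r 0 (plug D (subst t 0 (shift (depth D) 0 u))))"
| lam: "dbeta t t' \<Longrightarrow> dbeta (Lam t) (Lam t')"
| app1: "dbeta t t' \<Longrightarrow> dbeta (App t u r) (App t' u r)"
| app2: "dbeta u u' \<Longrightarrow> dbeta (App t u r) (App t u' r)"
| app3: "dbeta r r' \<Longrightarrow> dbeta (App t u r) (App t u r')"

definition SN_dbeta :: "trm \<Rightarrow> bool" where
  "SN_dbeta t \<longleftrightarrow> \<not> (\<exists>f. f 0 = t \<and> (\<forall>i. dbeta (f i) (f (Suc i))))"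

datatype ty = TAtom nat | Arr "ty multiset" ty

type_synonym env = "nat \<Rightarrow> ty multiset"

text \<open>Gamma; x:M for the bound index 0 (the de Bruijn extension; x is fresh by construction).\<close>
definition econs :: "ty multiset \<Rightarrow> env \<Rightarrow> env" where
  "econs M \<Gamma> = (\<lambda>n. case n of 0 \<Rightarrow> M | Suc k \<Rightarrow> \<Gamma> k)"

definition ch_rel :: "ty multiset \<Rightarrow> ty multiset \<Rightarrow> bool" where
  "ch_rel M N \<longleftrightarrow> (M \<noteq> {#} \<and> N = M) \<or> (M = {#} \<and> (\<exists>\<tau>. N = {#\<tau>#}))"

inductive has_type :: "env \<Rightarrow> trm \<Rightarrow> ty \<Rightarrow> bool"
  and has_mtype :: "env \<Rightarrow> trm \<Rightarrow> ty multiset \<Rightarrow> bool" where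
  var: "has_type ((\<lambda>_. {#})(x := {#\<sigma>#})) (Var x) \<sigma>"
| abs: "has_type (econs M \<Gamma>) t \<sigma> \<Longrightarrow> has_type \<Gamma> (Lam t) (Arr M \<sigma>)"
| many: "\<lbrakk> finite (I :: nat set); I \<noteq> {}; \<forall>i\<in>I. has_type (\<Gamma>s i) t (\<sigma>s i) \<rbrakk>
         \<Longrightarrow> has_mtype (\<lambda>x. \<Sum>i\<in>I. \<Gamma>s i x) t (\<Sum>i\<in>I. {#\<sigma>s i#})"
| app: "\<lbrakk> finite (I :: nat set);
          ch_rel (\<Sum>i\<in>I. {#Arr (Ms i) (\<tau>s i)#}) A; has_mtype \<Gamma> t A;
          ch_rel (\<Sum>i\<in>I. Ms i) B; has_mtype \<Delta> u B;
          has_type (econs (\<Sum>i\<in>I. {#\<tau>s i#}) \<Lambda>) r \<sigma> \<rbrakk>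
        \<Longrightarrow> has_type (\<lambda>x. \<Gamma> x + \<Delta> x + \<Lambda> x) (App t u r) \<sigma>"

end

theory Submission
  imports Defs "HOL-Library.Function_Algebras"
begin


inductive mt :: "env \<Rightarrow> trm \<Rightarrow> ty multiset \<Rightarrow> bool" where
  mt_empty: "mt 0 t {#}"
| mt_one: "has_type \<Gamma> t \<sigma> \<Longrightarrow> mt \<Gamma> t {#\<sigma>#}"
| mt_plus: "mt \<Gamma>1 t A1 \<Longrightarrow> mt \<Gamma>2 t A2 \<Longrightarrow> mt (\<Gamma>1 + \<Gamma>2) t (A1 + A2)"

lemma eta_plus: "(\<lambda>a. (\<Gamma>1::env) a + \<Gamma>2 a) = \<Gamma>1 + \<Gamma>2"
  by (simp add: plus_fun_def)

lemma mt_plus': "mt \<Gamma>1 t A1 \<Longrightarrow> mt \<Gamma>2 t A2 \<Longrightarrow> mt (\<Gamma>1 + \<Gamma>2) t (A1 + A2)"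
  using mt_plus[of \<Gamma>1 t A1 \<Gamma>2 A2] by (simp add: eta_plus)

lemma sum_list_fun_apply: "(sum_list (fs :: env list)) x = sum_list (map (\<lambda>f. f x) fs)"
  by (induction fs) auto

lemma mt_list: "mt \<Gamma> t A \<Longrightarrow> \<exists>xs. (\<forall>p\<in>set xs. has_type (fst p) t (snd p)) \<and>
    \<Gamma> = sum_list (map fst xs) \<and> A = mset (map snd xs)"
proof (induction rule: mt.induct)
  case (mt_empty t) then show ?case by (intro exI[of _ "[]"]) auto
next
  case (mt_one \<Gamma> t \<sigma>) then show ?case by (intro exI[of _ "[(\<Gamma>,\<sigma>)]"]) auto
next
  case (mt_plus \<Gamma>1 t A1 \<Gamma>2 A2)
  then obtain xs ys where "(\<forall>p\<in>set xs. has_type (fst p) t (snd p))" "\<Gamma>1 = sum_list (map fst xs)" "A1 = mset (map snd xs)"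
    "(\<forall>p\<in>set ys. has_type (fst p) t (snd p))" "\<Gamma>2 = sum_list (map fst ys)" "A2 = mset (map snd ys)" by blast
  then show ?case by (intro exI[of _ "xs @ ys"]) auto
qed

lemma list_mt: "(\<forall>p\<in>set xs. has_type (fst p) t (snd p)) \<Longrightarrow> mt (sum_list (map fst xs)) t (mset (map snd xs))"
proof (induction xs)
  case Nil then show ?case using mt_empty by (simp add: zero_fun_def)
next
  case (Cons a xs)
  have "mt (fst a + sum_list (map fst xs)) t ({#snd a#} + mset (map snd xs))"
    using Cons by (intro mt_plus mt_one) auto
  then show ?case by (simp add: plus_fun_def)
qed

lemma finite_list: "finite (I::nat set) \<Longrightarrow> \<exists>xs. distinct xs \<and> set xs = I"
  using finite_distinct_list by blast

lemma sum_list_single_mset: "sum_list (map (\<lambda>i. {#f i#}) xs) = mset (map f xs)"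
  by (induction xs) auto

lemma sum_fun_apply: "(sum (f :: nat \<Rightarrow> env) A) x = sum (\<lambda>i. f i x) A"
  by (induction A rule: infinite_finite_induct) auto

lemma has_mtype_mt: assumes "has_mtype \<Gamma> t A" shows "mt \<Gamma> t A \<and> A \<noteq> {#}"
  using assms
proof (cases rule: has_mtype.cases)
  case (many I \<Gamma>s \<sigma>s)
  obtain xs where xs: "distinct xs" "set xs = I" using finite_list many by blast
  have e1: "(\<lambda>x. \<Sum>i\<in>I. \<Gamma>s i x) = sum_list (map \<Gamma>s xs)"
    by (auto simp: fun_eq_iff sum_list_fun_apply xs(2)[symmetric] sum.distinct_set_conv_list[OF xs(1)] o_def)
  have e2: "(\<Sum>i\<in>I. {#\<sigma>s i#}) = mset (map \<sigma>s xs)"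
    using sum.distinct_set_conv_list[OF xs(1), of "\<lambda>i. {#\<sigma>s i#}"] xs(2) sum_list_single_mset[of \<sigma>s xs] by simp
  have "mt (sum_list (map fst (map (\<lambda>i. (\<Gamma>s i, \<sigma>s i)) xs))) t (mset (map snd (map (\<lambda>i. (\<Gamma>s i, \<sigma>s i)) xs)))"
    using many xs by (intro list_mt) auto
  then have "mt (sum_list (map \<Gamma>s xs)) t (mset (map \<sigma>s xs))" by (simp add: o_def)
  moreover have hG: "\<Gamma> = (\<lambda>x. \<Sum>i\<in>I. \<Gamma>s i x)" and hA: "A = (\<Sum>i\<in>I. {#\<sigma>s i#})" using many by blast+
  ultimately have "mt \<Gamma> t A" using e1 e2 by simp
  moreover have "xs \<noteq> []" using many xs by auto
  then have "A \<noteq> {#}" using hA e2 by simp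
  ultimately show ?thesis by blast
qed

lemma list_has_mtype: "xs \<noteq> [] \<Longrightarrow> (\<forall>p\<in>set xs. has_type (fst p) t (snd p)) \<Longrightarrow>
   has_mtype (sum_list (map fst xs)) t (mset (map snd xs))"
proof -
  assume ne: "xs \<noteq> []" and h: "\<forall>p\<in>set xs. has_type (fst p) t (snd p)"
  let ?I = "{0..<length xs}"
  have "has_mtype (\<lambda>x. \<Sum>i\<in>?I. fst (xs!i) x) t (\<Sum>i\<in>?I. {#snd (xs!i)#})"
    using ne h by (intro has_type_has_mtype.many) auto
  moreover have "(\<lambda>x. \<Sum>i\<in>?I. fst (xs!i) x) = sum_list (map fst xs)"
    by (auto simp: fun_eq_iff sum_list_fun_apply sum_list_sum_nth sum_fun_apply)
  moreover have "(\<Sum>i\<in>?I. {#snd (xs!i)#}) = mset (map snd xs)"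
  proof -
    have "(\<Sum>i\<in>?I. {#snd (xs!i)#}) = sum_list (map (\<lambda>p. {#snd p#}) xs)"
      by (simp add: sum_list_sum_nth)
    also have "\<dots> = mset (map snd xs)" using sum_list_single_mset[of snd xs] by simp
    finally show ?thesis .
  qed
  ultimately show ?thesis by simp
qed

lemma mt_has_mtype: assumes "mt \<Gamma> t A" "A \<noteq> {#}" shows "has_mtype \<Gamma> t A"
proof -
  obtain xs where xs: "\<forall>p\<in>set xs. has_type (fst p) t (snd p)" "\<Gamma> = sum_list (map fst xs)" "A = mset (map snd xs)"
    using mt_list[OF assms(1)] by blast
  have "xs \<noteq> []" using xs(3) assms(2) by auto
  then show ?thesis using list_has_mtype[OF _ xs(1)] xs(2,3) by simp
qed

lemma has_mtype_iff: "has_mtype \<Gamma> t A \<longleftrightarrow> mt \<Gamma> t A \<and> A \<noteq> {#}"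
  using has_mtype_mt mt_has_mtype by blast

lemma mt_single: "mt \<Gamma> t {#\<sigma>#} \<Longrightarrow> has_type \<Gamma> t \<sigma>"
proof -
  assume h: "mt \<Gamma> t {#\<sigma>#}"
  obtain xs where xs0: "(\<forall>p\<in>set xs. has_type (fst p) t (snd p)) \<and> \<Gamma> = sum_list (map fst xs) \<and> {#\<sigma>#} = mset (map snd xs)"
    using mt_list[OF h] by (elim exE) (rule that)
  note xs = conjunct1[OF xs0] conjunct1[OF conjunct2[OF xs0]] conjunct2[OF conjunct2[OF xs0]]
  have "length xs = 1" using arg_cong[OF xs(3), of size] by simp
  then obtain p where p: "xs = [p]" by (auto simp: length_Suc_conv)
  have "snd p = \<sigma>" using xs(3)[symmetric] p by simp
  then show ?thesis using xs(1,2) p by simp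
qed

definition chm :: "env \<Rightarrow> trm \<Rightarrow> ty multiset \<Rightarrow> bool" where
  "chm \<Gamma> t M \<longleftrightarrow> (\<exists>A. ch_rel M A \<and> has_mtype \<Gamma> t A)"

lemma chm_iff: "chm \<Gamma> t M \<longleftrightarrow> (M \<noteq> {#} \<and> mt \<Gamma> t M) \<or> (M = {#} \<and> (\<exists>\<tau>. has_type \<Gamma> t \<tau>))"
proof
  assume "chm \<Gamma> t M"
  then obtain A where A: "ch_rel M A" "has_mtype \<Gamma> t A" unfolding chm_def by blast
  show "(M \<noteq> {#} \<and> mt \<Gamma> t M) \<or> (M = {#} \<and> (\<exists>\<tau>. has_type \<Gamma> t \<tau>))"
  proof (cases "M = {#}")
    case True
    then obtain \<tau> where "A = {#\<tau>#}" using A(1) unfolding ch_rel_def by blast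
    then have "has_type \<Gamma> t \<tau>" using A(2) has_mtype_mt mt_single by metis
    then show ?thesis using True by blast
  next
    case False
    then have "A = M" using A(1) unfolding ch_rel_def by blast
    then have "mt \<Gamma> t M" using A(2) has_mtype_mt by metis
    then show ?thesis using False by blast
  qed
next
  assume "(M \<noteq> {#} \<and> mt \<Gamma> t M) \<or> (M = {#} \<and> (\<exists>\<tau>. has_type \<Gamma> t \<tau>))"
  then show "chm \<Gamma> t M"
  proof
    assume "M \<noteq> {#} \<and> mt \<Gamma> t M"
    then have "ch_rel M M" "has_mtype \<Gamma> t M" unfolding ch_rel_def using mt_has_mtype by auto
    then show ?thesis unfolding chm_def by blast
  next
    assume "M = {#} \<and> (\<exists>\<tau>. has_type \<Gamma> t \<tau>)"
    then obtain \<tau> where "M = {#}" "has_type \<Gamma> t \<tau>" by blast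
    then have "ch_rel M {#\<tau>#}" unfolding ch_rel_def by auto
    moreover have "has_mtype \<Gamma> t {#\<tau>#}" by (rule mt_has_mtype[OF mt_one]) (use \<open>has_type \<Gamma> t \<tau>\<close> in auto)
    ultimately show ?thesis unfolding chm_def by blast
  qed
qed

definition Typ :: "trm \<Rightarrow> bool" where "Typ t \<longleftrightarrow> (\<exists>\<Gamma> \<sigma>. has_type \<Gamma> t \<sigma>)"
definition Flex :: "trm \<Rightarrow> bool" where "Flex t \<longleftrightarrow> (\<forall>\<sigma>. \<exists>\<Gamma>. has_type \<Gamma> t \<sigma>)"

definition arrs :: "(ty multiset \<times> ty) list \<Rightarrow> ty multiset" where
  "arrs ps = mset (map (\<lambda>p. Arr (fst p) (snd p)) ps)"

lemma app_iff: "has_type \<Gamma> (App t u r) \<sigma> \<longleftrightarrow> (\<exists>ps \<Gamma>1 \<Gamma>2 \<Lambda>. chm \<Gamma>1 t (arrs ps) \<and> chm \<Gamma>2 u (sum_list (map fst ps))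
   \<and> has_type (econs (mset (map snd ps)) \<Lambda>) r \<sigma> \<and> \<Gamma> = \<Gamma>1 + \<Gamma>2 + \<Lambda>)"
proof
  assume "has_type \<Gamma> (App t u r) \<sigma>"
  then show "\<exists>ps \<Gamma>1 \<Gamma>2 \<Lambda>. chm \<Gamma>1 t (arrs ps) \<and> chm \<Gamma>2 u (sum_list (map fst ps))
   \<and> has_type (econs (mset (map snd ps)) \<Lambda>) r \<sigma> \<and> \<Gamma> = \<Gamma>1 + \<Gamma>2 + \<Lambda>"
  proof (cases rule: has_type.cases)
    case (app I Ms \<tau>s A \<Gamma>1 B \<Gamma>2 \<Lambda>)
    obtain xs where xs: "distinct xs" "set xs = I" using finite_list app by blast
    define ps where "ps = map (\<lambda>i. (Ms i, \<tau>s i)) xs"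
    have e1: "(\<Sum>i\<in>I. {#Arr (Ms i) (\<tau>s i)#}) = arrs ps"
    proof -
      have "(\<Sum>i\<in>I. {#Arr (Ms i) (\<tau>s i)#}) = sum_list (map (\<lambda>i. {#Arr (Ms i) (\<tau>s i)#}) xs)"
        using sum.distinct_set_conv_list[OF xs(1), of "\<lambda>i. {#Arr (Ms i) (\<tau>s i)#}"] xs(2) by simp
      also have "\<dots> = mset (map (\<lambda>i. Arr (Ms i) (\<tau>s i)) xs)" by (rule sum_list_single_mset)
      finally show ?thesis unfolding arrs_def ps_def by (simp add: o_def)
    qed
    have e2: "sum Ms I = sum_list (map fst ps)"
      unfolding ps_def using sum.distinct_set_conv_list[OF xs(1), of Ms] xs(2) by (simp add: o_def)
    have e3: "(\<Sum>i\<in>I. {#\<tau>s i#}) = mset (map snd ps)"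
    proof -
      have "(\<Sum>i\<in>I. {#\<tau>s i#}) = sum_list (map (\<lambda>i. {#\<tau>s i#}) xs)"
        using sum.distinct_set_conv_list[OF xs(1), of "\<lambda>i. {#\<tau>s i#}"] xs(2) by simp
      also have "\<dots> = mset (map \<tau>s xs)" by (rule sum_list_single_mset)
      finally show ?thesis unfolding ps_def by (simp add: o_def)
    qed
    show ?thesis
    proof (intro exI conjI)
      show "chm \<Gamma>1 t (arrs ps)" unfolding chm_def e1[symmetric] using app by blast
      show "chm \<Gamma>2 u (sum_list (map fst ps))" unfolding chm_def e2[symmetric] using app by blast
      show "has_type (econs (mset (map snd ps)) \<Lambda>) r \<sigma>" unfolding e3[symmetric] using app by blast
      show "\<Gamma> = \<Gamma>1 + \<Gamma>2 + \<Lambda>" using app by (simp add: plus_fun_def)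
    qed
  qed
next
  assume "\<exists>ps \<Gamma>1 \<Gamma>2 \<Lambda>. chm \<Gamma>1 t (arrs ps) \<and> chm \<Gamma>2 u (sum_list (map fst ps))
   \<and> has_type (econs (mset (map snd ps)) \<Lambda>) r \<sigma> \<and> \<Gamma> = \<Gamma>1 + \<Gamma>2 + \<Lambda>"
  then obtain ps \<Gamma>1 \<Gamma>2 \<Lambda> A B where h: "ch_rel (arrs ps) A" "has_mtype \<Gamma>1 t A"
     "ch_rel (sum_list (map fst ps)) B" "has_mtype \<Gamma>2 u B"
     "has_type (econs (mset (map snd ps)) \<Lambda>) r \<sigma>" "\<Gamma> = \<Gamma>1 + \<Gamma>2 + \<Lambda>"
    unfolding chm_def by blast
  let ?I = "{0..<length ps}"
  have e1: "(\<Sum>i\<in>?I. {#Arr (fst (ps!i)) (snd (ps!i))#}) = arrs ps"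
    unfolding arrs_def using sum_list_single_mset[of "\<lambda>p. Arr (fst p) (snd p)" ps]
    by (simp add: sum_list_sum_nth)
  have e2: "(\<Sum>i\<in>?I. fst (ps!i)) = sum_list (map fst ps)"
    by (simp add: sum_list_sum_nth)
  have e3: "(\<Sum>i\<in>?I. {#snd (ps!i)#}) = mset (map snd ps)"
    using sum_list_single_mset[of snd ps] by (simp add: sum_list_sum_nth)
  have a1: "ch_rel (\<Sum>i\<in>?I. {#Arr (fst (ps!i)) (snd (ps!i))#}) A" using h(1) by (simp only: e1)
  have a2: "ch_rel (\<Sum>i\<in>?I. fst (ps!i)) B" using h(3) by (simp only: e2)
  have a3: "has_type (econs (\<Sum>i\<in>?I. {#snd (ps!i)#}) \<Lambda>) r \<sigma>" using h(5) by (simp only: e3)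
  have "has_type (\<lambda>x. \<Gamma>1 x + \<Gamma>2 x + \<Lambda> x) (App t u r) \<sigma>"
    by (rule has_type_has_mtype.app[OF _ a1 h(2) a2 h(4) a3]) simp
  then show "has_type \<Gamma> (App t u r) \<sigma>" using h(6) by (simp add: plus_fun_def)
qed

lemma app_E:
  assumes "has_type \<Gamma> (App t u r) \<sigma>"
  obtains ps \<Gamma>1 \<Gamma>2 \<Lambda> where "chm \<Gamma>1 t (arrs ps)" "chm \<Gamma>2 u (sum_list (map fst ps))"
   "has_type (econs (mset (map snd ps)) \<Lambda>) r \<sigma>" "\<Gamma> = \<Gamma>1 + \<Gamma>2 + \<Lambda>"
  using assms unfolding app_iff
  apply (elim exE conjE)
  apply (rule that)
     apply assumption+
  done

lemma app_I:
  assumes "chm \<Gamma>1 t (arrs ps)" "chm \<Gamma>2 u (sum_list (map fst ps))"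
   "has_type (econs (mset (map snd ps)) \<Lambda>) r \<sigma>"
  shows "has_type (\<Gamma>1 + \<Gamma>2 + \<Lambda>) (App t u r) \<sigma>"
  unfolding app_iff
  apply (intro exI conjI)
     apply (rule assms(1))
    apply (rule assms(2))
   apply (rule assms(3))
  apply (rule refl)
  done

lemma lam_iff: "has_type \<Gamma> (Lam t) \<tau> \<longleftrightarrow> (\<exists>M \<sigma>. \<tau> = Arr M \<sigma> \<and> has_type (econs M \<Gamma>) t \<sigma>)"
  by (auto elim: has_type.cases intro: has_type_has_mtype.abs)

lemma var_iff: "has_type \<Gamma> (Var x) \<sigma> \<longleftrightarrow> \<Gamma> = (\<lambda>_. {#})(x := {#\<sigma>#})"
  by (auto elim: has_type.cases intro: has_type_has_mtype.var)



definition ins :: "nat \<Rightarrow> ty multiset \<Rightarrow> env \<Rightarrow> env" where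
  "ins k M \<Gamma> = (\<lambda>n. if n < k then \<Gamma> n else if n = k then M else \<Gamma> (n - 1))"
definition del :: "nat \<Rightarrow> env \<Rightarrow> env" where
  "del k \<Gamma> = (\<lambda>n. if n < k then \<Gamma> n else \<Gamma> (Suc n))"

lemma ins_0: "ins 0 M \<Gamma> = econs M \<Gamma>"
  by (auto simp: ins_def econs_def fun_eq_iff split: nat.split)
lemma ins_add: "ins k (M1 + M2) (\<Gamma>1 + \<Gamma>2) = ins k M1 \<Gamma>1 + ins k M2 \<Gamma>2"
  by (auto simp: ins_def fun_eq_iff)
lemma ins_zero: "ins k {#} 0 = 0"
  by (auto simp: ins_def fun_eq_iff)
lemma del_add: "del k (\<Gamma>1 + \<Gamma>2) = del k \<Gamma>1 + del k \<Gamma>2"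
  by (auto simp: del_def fun_eq_iff)
lemma del_zero: "del k 0 = 0"
  by (auto simp: del_def fun_eq_iff)
lemma ins_Suc: "ins (Suc k) N \<Gamma> = econs (\<Gamma> 0) (ins k N (del 0 \<Gamma>))"
  by (auto simp: ins_def del_def econs_def fun_eq_iff split: nat.split)
lemma del_Suc_econs: "del (Suc k) (econs M \<Gamma>) = econs M (del k \<Gamma>)"
  by (auto simp: del_def econs_def fun_eq_iff split: nat.split)
lemma econs_eta: "econs (\<Gamma> 0) (del 0 \<Gamma>) = \<Gamma>"
  by (auto simp: del_def econs_def fun_eq_iff split: nat.split)
lemma econs_at0: "econs M \<Gamma> 0 = M"
  by (simp add: econs_def)
lemma del0_econs: "del 0 (econs M \<Gamma>) = \<Gamma>"
  by (auto simp: del_def econs_def fun_eq_iff)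
lemma econs_Suc: "econs M \<Gamma> (Suc k) = \<Gamma> k"
  by (simp add: econs_def)

lemma single_del: "j \<noteq> k \<Longrightarrow> i = (if j < k then j else j - 1) \<Longrightarrow>
   del k ((\<lambda>_. {#})(j := {#\<sigma>#})) = (\<lambda>_. {#})(i := {#\<sigma>#})"
  by (auto simp: del_def fun_eq_iff)

lemma shift_add: "shift (m + n) k v = shift m k (shift n k v)"
  by (induction v arbitrary: k) auto
lemma shift_0: "shift 0 k v = v"
  by (induction v arbitrary: k) auto

lemma mt_anti_shift_gen:
  assumes "mt \<Gamma> w A" "w = shift 1 k v"
    and IH: "\<And>\<Gamma> \<sigma>. has_type \<Gamma> (shift 1 k v) \<sigma> \<Longrightarrow> \<Gamma> k = {#} \<and> has_type (del k \<Gamma>) v \<sigma>"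
  shows "\<Gamma> k = {#} \<and> mt (del k \<Gamma>) v A"
  using assms(1,2)
proof (induction rule: mt.induct)
  case (mt_empty t) then show ?case by (metis del_zero mt.mt_empty zero_fun_apply)
next
  case (mt_one \<Gamma> t \<sigma>) then show ?case using IH by (auto intro: mt.mt_one)
next
  case (mt_plus \<Gamma>1 t A1 \<Gamma>2 A2)
  have a: "\<Gamma>1 k = {#} \<and> mt (del k \<Gamma>1) v A1" using mt_plus.IH(1)[OF mt_plus.prems] .
  have b: "\<Gamma>2 k = {#} \<and> mt (del k \<Gamma>2) v A2" using mt_plus.IH(2)[OF mt_plus.prems] .
  note c = conjunct1[OF a] conjunct1[OF b] conjunct2[OF a] conjunct2[OF b]
  show ?case unfolding eta_plus del_add
    by (rule conjI, simp only: plus_fun_apply c(1,2) add_0, rule mt_plus'[OF c(3,4)])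
qed

lemma chm_anti_shift:
  assumes "chm \<Gamma> (shift 1 k v) A"
    and IH: "\<And>\<Gamma> \<sigma>. has_type \<Gamma> (shift 1 k v) \<sigma> \<Longrightarrow> \<Gamma> k = {#} \<and> has_type (del k \<Gamma>) v \<sigma>"
  shows "\<Gamma> k = {#} \<and> chm (del k \<Gamma>) v A"
  using assms(1) mt_anti_shift_gen[OF _ refl IH] IH unfolding chm_iff by blast

lemma anti_shift: "has_type \<Gamma> (shift 1 k v) \<sigma> \<Longrightarrow> \<Gamma> k = {#} \<and> has_type (del k \<Gamma>) v \<sigma>"
proof (induction v arbitrary: k \<Gamma> \<sigma>)
  case (Var i)
  let ?j = "if i < k then i else i + 1"
  have "shift 1 k (Var i) = Var ?j" by simp
  then have e: "\<Gamma> = (\<lambda>_. {#})(?j := {#\<sigma>#})" using Var var_iff by simp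
  have d: "del k ((\<lambda>_. {#})(?j := {#\<sigma>#})) = (\<lambda>_. {#})(i := {#\<sigma>#})"
    by (rule single_del) auto
  have "\<Gamma> k = {#}" using e by auto
  moreover have "has_type (del k \<Gamma>) (Var i) \<sigma>"
    by (subst e, subst d, rule has_type_has_mtype.var)
  ultimately show ?case by blast
next
  case (Lam t)
  then obtain M \<sigma>' where h: "\<sigma> = Arr M \<sigma>'" "has_type (econs M \<Gamma>) (shift 1 (Suc k) t) \<sigma>'"
    using lam_iff by auto
  from Lam.IH[OF h(2)] have "\<Gamma> k = {#}" "has_type (econs M (del k \<Gamma>)) t \<sigma>'"
    by (simp_all add: econs_Suc del_Suc_econs)
  then show ?case using h(1) lam_iff by auto
next
  case (App t u r)
  from App.prems obtain ps \<Gamma>1 \<Gamma>2 \<Lambda> where h: "chm \<Gamma>1 (shift 1 k t) (arrs ps)"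
     "chm \<Gamma>2 (shift 1 k u) (sum_list (map fst ps))"
     "has_type (econs (mset (map snd ps)) \<Lambda>) (shift 1 (Suc k) r) \<sigma>" "\<Gamma> = \<Gamma>1 + \<Gamma>2 + \<Lambda>"
    by (auto elim: app_E)
  from chm_anti_shift[OF h(1) App.IH(1)] have t: "\<Gamma>1 k = {#}" "chm (del k \<Gamma>1) t (arrs ps)" by auto
  from chm_anti_shift[OF h(2) App.IH(2)] have u: "\<Gamma>2 k = {#}" "chm (del k \<Gamma>2) u (sum_list (map fst ps))" by auto
  from App.IH(3)[OF h(3)] have r: "\<Lambda> k = {#}" "has_type (econs (mset (map snd ps)) (del k \<Lambda>)) r \<sigma>"
    by (simp_all add: econs_Suc del_Suc_econs)
  have "has_type (del k \<Gamma>1 + del k \<Gamma>2 + del k \<Lambda>) (App t u r) \<sigma>"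
    by (rule app_I[OF t(2) u(2) r(2)])
  moreover have "(\<Gamma>1 + \<Gamma>2 + \<Lambda>) k = {#}" using t u r by simp
  ultimately show ?case unfolding h(4) del_add by (rule conjI[rotated])
qed

lemma mt_anti_shift: "mt \<Gamma> (shift 1 k v) A \<Longrightarrow> \<Gamma> k = {#} \<and> mt (del k \<Gamma>) v A"
  using mt_anti_shift_gen[OF _ refl anti_shift] by blast



lemma ins_single_lt: "i < k \<Longrightarrow> ins k {#} ((\<lambda>_. {#})(i := {#\<sigma>#})) = (\<lambda>_. {#})(i := {#\<sigma>#})"
  by (auto simp: ins_def fun_eq_iff)
lemma ins_single_eq: "ins k {#\<sigma>#} 0 = (\<lambda>_. {#})(k := {#\<sigma>#})"
  by (auto simp: ins_def fun_eq_iff)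
lemma ins_single_gt: "k < i \<Longrightarrow> ins k {#} ((\<lambda>_. {#})(i - 1 := {#\<sigma>#})) = (\<lambda>_. {#})(i := {#\<sigma>#})"
  by (auto simp: ins_def fun_eq_iff)

definition AS :: "env \<Rightarrow> trm \<Rightarrow> nat \<Rightarrow> trm \<Rightarrow> (env \<Rightarrow> bool) \<Rightarrow> bool" where
  "AS \<Gamma> t k v P \<longleftrightarrow> (\<exists>\<Gamma>r M \<Delta>. P (ins k M \<Gamma>r) \<and> \<Gamma> = \<Gamma>r + \<Delta> \<and> mt \<Delta> v M)"

lemma mt_anti_subst_gen:
  assumes "mt \<Gamma> w A" "w = subst t k v"
    and IH: "\<And>\<Gamma> \<sigma>. has_type \<Gamma> (subst t k v) \<sigma> \<Longrightarrow> AS \<Gamma> t k v (\<lambda>E. has_type E t \<sigma>)"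
  shows "AS \<Gamma> t k v (\<lambda>E. mt E t A)"
  using assms(1,2)
proof (induction rule: mt.induct)
  case (mt_empty w)
  have "mt (ins k {#} 0) t {#}" unfolding ins_zero by (rule mt.mt_empty)
  moreover have "(0::env) = 0 + 0" by simp
  ultimately show ?case unfolding AS_def using mt.mt_empty by blast
next
  case (mt_one \<Gamma> w \<sigma>)
  then have "AS \<Gamma> t k v (\<lambda>E. has_type E t \<sigma>)" using IH by simp
  then show ?case unfolding AS_def using mt.mt_one by blast
next
  case (mt_plus \<Gamma>1 w A1 \<Gamma>2 A2)
  obtain \<Gamma>r1 M1 \<Delta>1 where a: "mt (ins k M1 \<Gamma>r1) t A1" "\<Gamma>1 = \<Gamma>r1 + \<Delta>1" "mt \<Delta>1 v M1"
    using mt_plus.IH(1)[OF mt_plus.prems] unfolding AS_def by blast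
  obtain \<Gamma>r2 M2 \<Delta>2 where b: "mt (ins k M2 \<Gamma>r2) t A2" "\<Gamma>2 = \<Gamma>r2 + \<Delta>2" "mt \<Delta>2 v M2"
    using mt_plus.IH(2)[OF mt_plus.prems] unfolding AS_def by blast
  have "mt (ins k (M1 + M2) (\<Gamma>r1 + \<Gamma>r2)) t (A1 + A2)" unfolding ins_add by (rule mt_plus'[OF a(1) b(1)])
  moreover have "\<Gamma>1 + \<Gamma>2 = (\<Gamma>r1 + \<Gamma>r2) + (\<Delta>1 + \<Delta>2)" unfolding a(2) b(2) by (simp only: ac_simps)
  moreover have "mt (\<Delta>1 + \<Delta>2) v (M1 + M2)" by (rule mt_plus'[OF a(3) b(3)])
  ultimately show ?case unfolding AS_def eta_plus by blast
qed

lemma chm_anti_subst: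
  assumes "chm \<Gamma> (subst t k v) X"
    and IH: "\<And>\<Gamma> \<sigma>. has_type \<Gamma> (subst t k v) \<sigma> \<Longrightarrow> AS \<Gamma> t k v (\<lambda>E. has_type E t \<sigma>)"
  shows "AS \<Gamma> t k v (\<lambda>E. chm E t X)"
proof (cases "X = {#}")
  case True
  then obtain \<tau> where "has_type \<Gamma> (subst t k v) \<tau>" using assms(1) unfolding chm_iff by blast
  from IH[OF this] obtain \<Gamma>r M \<Delta> where "has_type (ins k M \<Gamma>r) t \<tau>" "\<Gamma> = \<Gamma>r + \<Delta>" "mt \<Delta> v M"
    unfolding AS_def by blast
  then show ?thesis unfolding AS_def chm_iff using True by blast
next
  case False
  then have "mt \<Gamma> (subst t k v) X" using assms(1) unfolding chm_iff by blast
  from mt_anti_subst_gen[OF this refl IH] obtain \<Gamma>r M \<Delta> where "mt (ins k M \<Gamma>r) t X" "\<Gamma> = \<Gamma>r + \<Delta>" "mt \<Delta> v M"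
    unfolding AS_def by blast
  then show ?thesis unfolding AS_def chm_iff using False by blast
qed

lemma econs_split:
  assumes "econs N \<Lambda> = \<Gamma>r + \<Delta>" "\<Delta> 0 = {#}"
  shows "\<Gamma>r 0 = N" "\<Lambda> = del 0 \<Gamma>r + del 0 \<Delta>"
proof -
  have "econs N \<Lambda> 0 = \<Gamma>r 0 + \<Delta> 0" using assms(1) by simp
  then show "\<Gamma>r 0 = N" using assms(2) by (simp add: econs_at0)
  have "del 0 (econs N \<Lambda>) = del 0 (\<Gamma>r + \<Delta>)" using assms(1) by simp
  then show "\<Lambda> = del 0 \<Gamma>r + del 0 \<Delta>" by (simp only: del0_econs del_add)
qed

lemma anti_subst: "has_type \<Gamma> (subst r k v) \<sigma> \<Longrightarrow> AS \<Gamma> r k v (\<lambda>E. has_type E r \<sigma>)"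
proof (induction r arbitrary: k v \<Gamma> \<sigma>)
  case (Var i)
  show ?case
  proof (cases "i < k")
    case True
    then have "\<Gamma> = (\<lambda>_. {#})(i := {#\<sigma>#})" using Var.prems var_iff by simp
    moreover have "has_type (ins k {#} ((\<lambda>_. {#})(i := {#\<sigma>#}))) (Var i) \<sigma>"
      unfolding ins_single_lt[OF True] by (rule has_type_has_mtype.var)
    moreover have "(\<lambda>_. {#})(i := {#\<sigma>#}) = (\<lambda>_. {#})(i := {#\<sigma>#}) + (0::env)" by simp
    ultimately show ?thesis unfolding AS_def using mt.mt_empty by blast
  next
    case False
    show ?thesis
    proof (cases "i = k")
      case True
      then have "has_type \<Gamma> v \<sigma>" using Var.prems by simp
      moreover have "has_type (ins k {#\<sigma>#} 0) (Var i) \<sigma>"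
        unfolding ins_single_eq True by (rule has_type_has_mtype.var)
      moreover have "\<Gamma> = 0 + \<Gamma>" by simp
      ultimately show ?thesis unfolding AS_def using mt.mt_one by blast
    next
      case False2: False
      then have gt: "k < i" using False by simp
      then have "\<Gamma> = (\<lambda>_. {#})(i - 1 := {#\<sigma>#})" using Var.prems var_iff False by simp
      moreover have "has_type (ins k {#} ((\<lambda>_. {#})(i - 1 := {#\<sigma>#}))) (Var i) \<sigma>"
        unfolding ins_single_gt[OF gt] by (rule has_type_has_mtype.var)
      moreover have "(\<lambda>_. {#})(i - 1 := {#\<sigma>#}) = (\<lambda>_. {#})(i - 1 := {#\<sigma>#}) + (0::env)" by simp
      ultimately show ?thesis unfolding AS_def using mt.mt_empty by blast
    qed
  qed
next
  case (Lam t)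
  have "has_type \<Gamma> (Lam (subst t (Suc k) (shift 1 0 v))) \<sigma>" using Lam.prems by simp
  then obtain M0 \<sigma>' where h: "\<sigma> = Arr M0 \<sigma>'" "has_type (econs M0 \<Gamma>) (subst t (Suc k) (shift 1 0 v)) \<sigma>'"
    unfolding lam_iff by blast
  from Lam.IH[OF h(2)] obtain \<Gamma>r M \<Delta> where a: "has_type (ins (Suc k) M \<Gamma>r) t \<sigma>'"
     "econs M0 \<Gamma> = \<Gamma>r + \<Delta>" "mt \<Delta> (shift 1 0 v) M" unfolding AS_def by blast
  from mt_anti_shift[OF a(3)] have d: "\<Delta> 0 = {#}" "mt (del 0 \<Delta>) v M" by simp_all
  note sp = econs_split[OF a(2) d(1)]
  have "has_type (econs M0 (ins k M (del 0 \<Gamma>r))) t \<sigma>'" using a(1) unfolding ins_Suc sp(1) .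
  then have "has_type (ins k M (del 0 \<Gamma>r)) (Lam t) \<sigma>" unfolding h(1) lam_iff by blast
  then show ?case unfolding AS_def using sp(2) d(2) by blast
next
  case (App t u r)
  have "has_type \<Gamma> (App (subst t k v) (subst u k v) (subst r (Suc k) (shift 1 0 v))) \<sigma>"
    using App.prems by simp
  then obtain ps \<Gamma>1 \<Gamma>2 \<Lambda> where h: "chm \<Gamma>1 (subst t k v) (arrs ps)"
     "chm \<Gamma>2 (subst u k v) (sum_list (map fst ps))"
     "has_type (econs (mset (map snd ps)) \<Lambda>) (subst r (Suc k) (shift 1 0 v)) \<sigma>" "\<Gamma> = \<Gamma>1 + \<Gamma>2 + \<Lambda>"
    by (rule app_E)
  obtain \<Gamma>t Mt \<Delta>t where t: "chm (ins k Mt \<Gamma>t) t (arrs ps)" "\<Gamma>1 = \<Gamma>t + \<Delta>t" "mt \<Delta>t v Mt"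
    using chm_anti_subst[OF h(1) App.IH(1)] unfolding AS_def by blast
  obtain \<Gamma>u Mu \<Delta>u where u: "chm (ins k Mu \<Gamma>u) u (sum_list (map fst ps))" "\<Gamma>2 = \<Gamma>u + \<Delta>u" "mt \<Delta>u v Mu"
    using chm_anti_subst[OF h(2) App.IH(2)] unfolding AS_def by blast
  obtain \<Gamma>r Mr \<Delta>r where a: "has_type (ins (Suc k) Mr \<Gamma>r) r \<sigma>"
     "econs (mset (map snd ps)) \<Lambda> = \<Gamma>r + \<Delta>r" "mt \<Delta>r (shift 1 0 v) Mr"
    using App.IH(3)[OF h(3)] unfolding AS_def by blast
  from mt_anti_shift[OF a(3)] have d: "\<Delta>r 0 = {#}" "mt (del 0 \<Delta>r) v Mr" by simp_all
  note sp = econs_split[OF a(2) d(1)]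
  have r: "has_type (econs (mset (map snd ps)) (ins k Mr (del 0 \<Gamma>r))) r \<sigma>"
    using a(1) unfolding ins_Suc sp(1) .
  have "has_type (ins k Mt \<Gamma>t + ins k Mu \<Gamma>u + ins k Mr (del 0 \<Gamma>r)) (App t u r) \<sigma>"
    by (rule app_I[OF t(1) u(1) r])
  then have 1: "has_type (ins k (Mt + Mu + Mr) (\<Gamma>t + \<Gamma>u + del 0 \<Gamma>r)) (App t u r) \<sigma>"
    by (simp only: ins_add)
  have 2: "\<Gamma> = (\<Gamma>t + \<Gamma>u + del 0 \<Gamma>r) + (\<Delta>t + \<Delta>u + del 0 \<Delta>r)"
    unfolding h(4) t(2) u(2) sp(2) by (simp only: ac_simps)
  have 3: "mt (\<Delta>t + \<Delta>u + del 0 \<Delta>r) v (Mt + Mu + Mr)"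
    by (rule mt_plus'[OF mt_plus'[OF t(3) u(3)] d(2)])
  show ?case unfolding AS_def using 1 2 3 by blast
qed



lemma G_lemma:
  "has_type \<Delta> (plug D (subst s 0 (shift (depth D) 0 v))) \<tau> \<Longrightarrow>
   \<exists>M \<Delta>1 \<Delta>2. has_type \<Delta>1 (plug D (Lam s)) (Arr M \<tau>) \<and> \<Delta> = \<Delta>1 + \<Delta>2 \<and> mt \<Delta>2 v M"
proof (induction D arbitrary: \<Delta> \<tau> v)
  case Hole
  then have "has_type \<Delta> (subst s 0 v) \<tau>" by (simp add: shift_0)
  from anti_subst[OF this] obtain \<Gamma>r M \<Delta>2 where a: "has_type (ins 0 M \<Gamma>r) s \<tau>" "\<Delta> = \<Gamma>r + \<Delta>2" "mt \<Delta>2 v M"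
    unfolding AS_def by blast
  have "has_type \<Gamma>r (Lam s) (Arr M \<tau>)" using a(1) unfolding ins_0 by (rule has_type_has_mtype.abs)
  then show ?case using a(2,3) by auto
next
  case (LApp t1 u1 D')
  have sh: "shift (depth (LApp t1 u1 D')) 0 v = shift (depth D') 0 (shift 1 0 v)"
    using shift_add[of "depth D'" 1 0 v] by simp
  have "has_type \<Delta> (App t1 u1 (plug D' (subst s 0 (shift (depth D') 0 (shift 1 0 v))))) \<tau>"
    using LApp.prems unfolding sh by simp
  then obtain ps \<Gamma>1 \<Gamma>2 \<Lambda> where h: "chm \<Gamma>1 t1 (arrs ps)" "chm \<Gamma>2 u1 (sum_list (map fst ps))"
     "has_type (econs (mset (map snd ps)) \<Lambda>) (plug D' (subst s 0 (shift (depth D') 0 (shift 1 0 v)))) \<tau>"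
     "\<Delta> = \<Gamma>1 + \<Gamma>2 + \<Lambda>"
    by (rule app_E)
  from LApp.IH[OF h(3)] obtain M \<Delta>1 \<Delta>2 where a: "has_type \<Delta>1 (plug D' (Lam s)) (Arr M \<tau>)"
    "econs (mset (map snd ps)) \<Lambda> = \<Delta>1 + \<Delta>2" "mt \<Delta>2 (shift 1 0 v) M" by blast
  from mt_anti_shift[OF a(3)] have d: "\<Delta>2 0 = {#}" "mt (del 0 \<Delta>2) v M" by simp_all
  note sp = econs_split[OF a(2) d(1)]
  have "has_type (econs (mset (map snd ps)) (del 0 \<Delta>1)) (plug D' (Lam s)) (Arr M \<tau>)"
    using a(1) econs_eta[of \<Delta>1] unfolding sp(1) by simp
  from app_I[OF h(1) h(2) this] have "has_type (\<Gamma>1 + \<Gamma>2 + del 0 \<Delta>1) (plug (LApp t1 u1 D') (Lam s)) (Arr M \<tau>)"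
    by simp
  moreover have "\<Delta> = (\<Gamma>1 + \<Gamma>2 + del 0 \<Delta>1) + del 0 \<Delta>2" unfolding h(4) sp(2) by (simp only: ac_simps)
  ultimately show ?case using d(2) by blast
qed

lemma arrs_append: "arrs (ps @ qs) = arrs ps + arrs qs"
  by (simp add: arrs_def)

lemma mt_G:
  assumes "mt \<Delta> w N" "w = plug D (subst s 0 (shift (depth D) 0 u))"
  shows "\<exists>ps \<Gamma>a \<Gamma>b. mt \<Gamma>a (plug D (Lam s)) (arrs ps) \<and> mt \<Gamma>b u (sum_list (map fst ps)) \<and> N = mset (map snd ps)"
  using assms
proof (induction rule: mt.induct)
  case (mt_empty t)
  have "mt 0 (plug D (Lam s)) (arrs [])" "mt 0 u (sum_list (map fst ([]::(ty multiset \<times> ty) list)))"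
    by (simp_all add: arrs_def mt.mt_empty)
  then show ?case by (intro exI[of _ "[]"] exI conjI) simp_all
next
  case (mt_one \<Gamma> t \<sigma>)
  from G_lemma[of \<Gamma> D s u \<sigma>] mt_one obtain M \<Delta>1 \<Delta>2 where
    a: "has_type \<Delta>1 (plug D (Lam s)) (Arr M \<sigma>)" "mt \<Delta>2 u M" by blast
  have "mt \<Delta>1 (plug D (Lam s)) (arrs [(M, \<sigma>)])" using mt.mt_one[OF a(1)] by (simp add: arrs_def)
  moreover have "mt \<Delta>2 u (sum_list (map fst [(M, \<sigma>)]))" using a(2) by simp
  moreover have "{#\<sigma>#} = mset (map snd [(M, \<sigma>)])" by simp
  ultimately show ?case by (intro exI[of _ "[(M, \<sigma>)]"] exI conjI)
next
  case (mt_plus \<Gamma>1 t A1 \<Gamma>2 A2)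
  obtain ps \<Gamma>a \<Gamma>b where a: "mt \<Gamma>a (plug D (Lam s)) (arrs ps)" "mt \<Gamma>b u (sum_list (map fst ps))" "A1 = mset (map snd ps)"
    using mt_plus.IH(1)[OF mt_plus.prems] by blast
  obtain qs \<Gamma>a' \<Gamma>b' where b: "mt \<Gamma>a' (plug D (Lam s)) (arrs qs)" "mt \<Gamma>b' u (sum_list (map fst qs))" "A2 = mset (map snd qs)"
    using mt_plus.IH(2)[OF mt_plus.prems] by blast
  have "mt (\<Gamma>a + \<Gamma>a') (plug D (Lam s)) (arrs (ps @ qs))" unfolding arrs_append by (rule mt_plus'[OF a(1) b(1)])
  moreover have "mt (\<Gamma>b + \<Gamma>b') u (sum_list (map fst (ps @ qs)))" using mt_plus'[OF a(2) b(2)] by simp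
  moreover have "A1 + A2 = mset (map snd (ps @ qs))" unfolding a(3) b(3) by simp
  ultimately show ?case by (intro exI[of _ "ps @ qs"] exI conjI)
qed

lemma Typ_has: "Typ t \<Longrightarrow> \<exists>\<Gamma> \<tau>. has_type \<Gamma> t \<tau>" by (simp add: Typ_def)

lemma chm_of_mt: "mt \<Gamma> t M \<Longrightarrow> Typ t \<Longrightarrow> \<exists>\<Gamma>'. chm \<Gamma>' t M"
  unfolding chm_iff Typ_def by (cases "M = {#}") blast+

lemma root_exp:
  assumes "Typ (plug D (Lam s))" "Typ u"
    and "has_type \<Gamma>' (subst r 0 (plug D (subst s 0 (shift (depth D) 0 u)))) \<sigma>"
  shows "\<exists>\<Gamma>. has_type \<Gamma> (App (plug D (Lam s)) u r) \<sigma>"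
proof -
  from anti_subst[OF assms(3)] obtain \<Gamma>r N \<Delta> where a: "has_type (ins 0 N \<Gamma>r) r \<sigma>"
    "mt \<Delta> (plug D (subst s 0 (shift (depth D) 0 u))) N" unfolding AS_def by blast
  from mt_G[OF a(2) refl] obtain ps \<Gamma>a \<Gamma>b where b: "mt \<Gamma>a (plug D (Lam s)) (arrs ps)"
    "mt \<Gamma>b u (sum_list (map fst ps))" "N = mset (map snd ps)" by blast
  obtain \<Gamma>1 where c1: "chm \<Gamma>1 (plug D (Lam s)) (arrs ps)" using chm_of_mt[OF b(1) assms(1)] by blast
  obtain \<Gamma>2 where c2: "chm \<Gamma>2 u (sum_list (map fst ps))" using chm_of_mt[OF b(2) assms(2)] by blast
  have r: "has_type (econs (mset (map snd ps)) \<Gamma>r) r \<sigma>" using a(1) unfolding ins_0 b(3) .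
  show ?thesis using app_I[OF c1 c2 r] by blast
qed

lemma mt_of_list: "(\<forall>x\<in>set xs. \<exists>\<Gamma>. has_type \<Gamma> t (f x)) \<Longrightarrow> \<exists>\<Gamma>. mt \<Gamma> t (mset (map f xs))"
proof (induction xs)
  case Nil then show ?case using mt.mt_empty by auto
next
  case (Cons a xs)
  then obtain \<Gamma>1 \<Gamma>2 where "has_type \<Gamma>1 t (f a)" "mt \<Gamma>2 t (mset (map f xs))" by auto
  from mt_plus'[OF mt.mt_one[OF this(1)] this(2)] show ?case by auto
qed

lemma Flex_Typ: "Flex t \<Longrightarrow> Typ t" unfolding Flex_def Typ_def by blast

lemma flex_app:
  assumes "Flex t" "Typ u" "has_type \<Lambda>' r \<sigma>"
  shows "\<exists>\<Gamma>. has_type \<Gamma> (App t u r) \<sigma>"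
proof -
  obtain xs where xs: "mset xs = \<Lambda>' 0" using ex_mset by blast
  define ps where "ps = map (\<lambda>\<tau>. ({#}::ty multiset, \<tau>)) xs"
  have e1: "arrs ps = mset (map (\<lambda>\<tau>. Arr {#} \<tau>) xs)" unfolding ps_def arrs_def by (simp add: o_def)
  have e2: "sum_list (map fst ps) = {#}" unfolding ps_def by (induction xs) auto
  have e3: "mset (map snd ps) = \<Lambda>' 0" unfolding ps_def using xs by (simp add: o_def)
  obtain \<Gamma>0 where "mt \<Gamma>0 t (mset (map (\<lambda>\<tau>. Arr {#} \<tau>) xs))"
    using mt_of_list[of xs t "\<lambda>\<tau>. Arr {#} \<tau>"] assms(1) unfolding Flex_def by blast
  then obtain \<Gamma>1 where c1: "chm \<Gamma>1 t (arrs ps)" using chm_of_mt Flex_Typ[OF assms(1)] unfolding e1 by blast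
  obtain \<Gamma>2 \<tau> where "has_type \<Gamma>2 u \<tau>" using assms(2) unfolding Typ_def by blast
  then have c2: "chm \<Gamma>2 u (sum_list (map fst ps))" unfolding e2 chm_iff by blast
  have r: "has_type (econs (mset (map snd ps)) (del 0 \<Lambda>')) r \<sigma>" unfolding e3 econs_eta by (rule assms(3))
  show ?thesis using app_I[OF c1 c2 r] by blast
qed

lemma mt_lift_gen:
  assumes "mt \<Gamma> w M" "w = t'" and IH: "\<And>\<Gamma> \<sigma>. has_type \<Gamma> t' \<sigma> \<Longrightarrow> \<exists>\<Gamma>2. has_type \<Gamma>2 t \<sigma>"
  shows "\<exists>\<Gamma>2. mt \<Gamma>2 t M"
  using assms(1,2)
proof (induction rule: mt.induct)
  case (mt_empty w) then show ?case using mt.mt_empty by blast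
next
  case (mt_one \<Gamma> w \<sigma>) then show ?case using IH mt.mt_one by blast
next
  case (mt_plus \<Gamma>1 w A1 \<Gamma>2 A2)
  obtain E1 E2 where "mt E1 t A1" "mt E2 t A2" using mt_plus.IH mt_plus.prems by blast
  from mt_plus'[OF this] show ?case by blast
qed

lemma chm_lift:
  assumes "chm \<Gamma> t' M" and IH: "\<And>\<Gamma> \<sigma>. has_type \<Gamma> t' \<sigma> \<Longrightarrow> \<exists>\<Gamma>2. has_type \<Gamma>2 t \<sigma>"
  shows "\<exists>\<Gamma>2. chm \<Gamma>2 t M"
proof (cases "M = {#}")
  case True
  then obtain \<tau> where "has_type \<Gamma> t' \<tau>" using assms(1) unfolding chm_iff by blast
  then obtain \<Gamma>2 where "has_type \<Gamma>2 t \<tau>" using IH by blast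
  then show ?thesis unfolding chm_iff using True by blast
next
  case False
  then have "mt \<Gamma> t' M" using assms(1) unfolding chm_iff by blast
  then have "\<exists>\<Gamma>2. mt \<Gamma>2 t M" by (rule mt_lift_gen[OF _ refl]) (erule IH)
  then obtain \<Gamma>2 where "mt \<Gamma>2 t M" by blast
  then show ?thesis unfolding chm_iff using False by blast
qed

lemma left_exp:
  assumes "has_type \<Gamma> (App t' u r) \<sigma>" and IH: "\<And>\<Gamma> \<sigma>. has_type \<Gamma> t' \<sigma> \<Longrightarrow> \<exists>\<Gamma>2. has_type \<Gamma>2 t \<sigma>"
  shows "\<exists>\<Gamma>. has_type \<Gamma> (App t u r) \<sigma>"
proof -
  obtain ps \<Gamma>1 \<Gamma>2 \<Lambda> where h: "chm \<Gamma>1 t' (arrs ps)" "chm \<Gamma>2 u (sum_list (map fst ps))"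
   "has_type (econs (mset (map snd ps)) \<Lambda>) r \<sigma>" using assms(1) by (rule app_E)
  have "\<exists>E. chm E t (arrs ps)" using h(1) by (rule chm_lift) (erule IH)
  then obtain E where "chm E t (arrs ps)" by blast
  from app_I[OF this h(2) h(3)] show ?thesis by blast
qed

lemma right_exp:
  assumes "has_type \<Gamma> (App t u r') \<sigma>" "Flex t" "Typ u"
    and IH: "\<And>\<Gamma> \<sigma>. has_type \<Gamma> r' \<sigma> \<Longrightarrow> \<exists>\<Gamma>2. has_type \<Gamma>2 r \<sigma>"
  shows "\<exists>\<Gamma>. has_type \<Gamma> (App t u r) \<sigma>"
proof -
  obtain ps \<Gamma>1 \<Gamma>2 \<Lambda> where h: "chm \<Gamma>1 t (arrs ps)" "chm \<Gamma>2 u (sum_list (map fst ps))"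
   "has_type (econs (mset (map snd ps)) \<Lambda>) r' \<sigma>" using assms(1) by (rule app_E)
  obtain E where "has_type E r \<sigma>" using IH[OF h(3)] by blast
  from flex_app[OF assms(2,3) this] show ?thesis .
qed



definition pa :: "trm \<Rightarrow> bool" where "pa t \<longleftrightarrow> (\<exists>D s. t = plug D (Lam s))"
definition Neu :: "trm \<Rightarrow> bool" where "Neu t \<longleftrightarrow> (\<forall>w. dbeta\<^sup>*\<^sup>* t w \<longrightarrow> \<not> pa w)"

inductive safe :: "trm \<Rightarrow> trm \<Rightarrow> bool" where
  sroot: "Typ (plug D (Lam s)) \<Longrightarrow> Typ u \<Longrightarrow>
     safe (App (plug D (Lam s)) u r) (subst r 0 (plug D (subst s 0 (shift (depth D) 0 u))))"
| sleft: "safe t t' \<Longrightarrow> safe (App t u r) (App t' u r)"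
| sright: "Flex t \<Longrightarrow> Typ u \<Longrightarrow> safe r r' \<Longrightarrow> safe (App t u r) (App t u r')"

lemma safe_dbeta: "safe t t' \<Longrightarrow> dbeta t t'"
  by (induction rule: safe.induct) (auto intro: dbeta.intros)

lemma safe_exp: "safe t t' \<Longrightarrow> has_type \<Gamma>' t' \<sigma> \<Longrightarrow> \<exists>\<Gamma>. has_type \<Gamma> t \<sigma>"
proof (induction arbitrary: \<Gamma>' \<sigma> rule: safe.induct)
  case (sroot D s u r)
  then show ?case using root_exp by blast
next
  case (sleft t t' u r)
  show ?case by (rule left_exp[OF sleft.prems]) (erule sleft.IH)
next
  case (sright t u r r')
  show ?case by (rule right_exp[OF sright.prems sright.hyps(1,2)]) (erule sright.IH)
qed

lemma pa_Lam: "pa (Lam s)"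
  unfolding pa_def by (rule exI[of _ Hole]) simp

lemma not_pa_Var: "\<not> pa (Var x)"
proof
  assume "pa (Var x)"
  then obtain D s where "Var x = plug D (Lam s)" unfolding pa_def by blast
  then show False by (cases D) auto
qed

lemma pa_App: "pa (App a b c) \<longleftrightarrow> pa c"
proof
  assume "pa (App a b c)"
  then obtain D s where h: "App a b c = plug D (Lam s)" unfolding pa_def by blast
  then show "pa c"
  proof (cases D)
    case Hole then show ?thesis using h by simp
  next
    case (LApp t u D') then show ?thesis using h unfolding pa_def by auto
  qed
next
  assume "pa c"
  then obtain D s where h: "c = plug D (Lam s)" unfolding pa_def by blast
  then have "App a b c = plug (LApp a b D) (Lam s)" by simp
  then show "pa (App a b c)" unfolding pa_def by blast
qed

lemma Neu_step: "Neu t \<Longrightarrow> dbeta t t' \<Longrightarrow> Neu t'"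
  unfolding Neu_def by (meson converse_rtranclp_into_rtranclp)

lemma Var_no_step: "\<not> dbeta (Var x) w"
  by (auto elim: dbeta.cases)

lemma Var_reach: "dbeta\<^sup>*\<^sup>* (Var x) w \<Longrightarrow> w = Var x"
  by (induction rule: rtranclp_induct) (auto simp: Var_no_step)

lemma Neu_Var: "Neu (Var x)"
  unfolding Neu_def using Var_reach not_pa_Var by blast

lemma app3_star: "dbeta\<^sup>*\<^sup>* c w \<Longrightarrow> dbeta\<^sup>*\<^sup>* (App a b c) (App a b w)"
  by (induction rule: rtranclp_induct) (auto intro: rtranclp.rtrancl_into_rtrancl dbeta.app3)

lemma Neu_App_right: "Neu (App a b c) \<Longrightarrow> Neu c"
  unfolding Neu_def using app3_star pa_App by blast

lemma App_reach:
  assumes "dbeta\<^sup>*\<^sup>* (App a b c) w" "Neu a"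
  shows "\<exists>a' b' c'. w = App a' b' c' \<and> dbeta\<^sup>*\<^sup>* a a' \<and> dbeta\<^sup>*\<^sup>* c c'"
  using assms(1)
proof (induction rule: rtranclp_induct)
  case base then show ?case by blast
next
  case (step y z)
  then obtain a' b' c' where y: "y = App a' b' c'" "dbeta\<^sup>*\<^sup>* a a'" "dbeta\<^sup>*\<^sup>* c c'" by blast
  have "dbeta (App a' b' c') z" using step(2) y(1) by simp
  then show ?case
  proof (cases rule: dbeta.cases)
    case root
    then have "pa a'" unfolding pa_def by blast
    then show ?thesis using assms(2) y(2) unfolding Neu_def by blast
  next
    case app1
    then show ?thesis using y by (blast intro: rtranclp.rtrancl_into_rtrancl)
  next
    case app2
    then show ?thesis using y by blast
  next
    case app3
    then show ?thesis using y by (blast intro: rtranclp.rtrancl_into_rtrancl)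
  qed
qed

inductive sub :: "trm \<Rightarrow> trm \<Rightarrow> bool" where
  sub_refl: "sub t t"
| sub_lam: "sub s t \<Longrightarrow> sub s (Lam t)"
| sub_app1: "sub s t \<Longrightarrow> sub s (App t u r)"
| sub_app2: "sub s u \<Longrightarrow> sub s (App t u r)"
| sub_app3: "sub s r \<Longrightarrow> sub s (App t u r)"

lemma sub_trans: "sub s t \<Longrightarrow> sub x s \<Longrightarrow> sub x t"
  by (induction rule: sub.induct) (auto intro: sub.intros)

lemma sub_size: "sub x s \<Longrightarrow> size x \<le> size s"
  by (induction rule: sub.induct) auto

lemma sub_step: "sub s t \<Longrightarrow> dbeta s s' \<Longrightarrow> \<exists>t'. dbeta t t' \<and> sub s' t'"
  by (induction rule: sub.induct) (auto intro: sub.intros dbeta.intros)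

definition MP :: "trm \<Rightarrow> bool" where "MP s \<longleftrightarrow> Typ s \<and> (Neu s \<longrightarrow> Flex s)"

lemma exists_safe:
  "\<not> pa t \<Longrightarrow> \<not> Neu t \<Longrightarrow> (\<forall>x. sub x t \<longrightarrow> MP x) \<Longrightarrow> \<exists>t'. safe t t'"
proof (induction t)
  case (Var x) then show ?case using Neu_Var by blast
next
  case (Lam t) then show ?case using pa_Lam by blast
next
  case (App a b c)
  have Ma: "\<forall>x. sub x a \<longrightarrow> MP x" using App.prems(3) sub_app1 by blast
  have Mc: "\<forall>x. sub x c \<longrightarrow> MP x" using App.prems(3) sub_app3 by blast
  have Ta: "MP a" using Ma sub_refl by blast
  have Tb: "MP b" using App.prems(3) sub_app2 sub_refl by blast
  show ?case
  proof (cases "pa a")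
    case True
    then obtain D s where a: "a = plug D (Lam s)" unfolding pa_def by blast
    have "Typ (plug D (Lam s))" "Typ b" using Ta Tb a unfolding MP_def by auto
    then show ?thesis unfolding a by (blast intro: sroot)
  next
    case False
    show ?thesis
    proof (cases "Neu a")
      case False2: False
      from App.IH(1)[OF False False2 Ma] obtain a' where "safe a a'" by blast
      then show ?thesis by (blast intro: sleft)
    next
      case True
      then have Fa: "Flex a" using Ta unfolding MP_def by blast
      have Tb': "Typ b" using Tb unfolding MP_def by blast
      have npc: "\<not> pa c" using App.prems(1) pa_App by blast
      have "\<not> Neu c"
      proof
        assume nc: "Neu c"
        have "Neu (App a b c)" unfolding Neu_def
        proof (intro allI impI)
          fix w assume "dbeta\<^sup>*\<^sup>* (App a b c) w"
          from App_reach[OF this True] obtain a' b' c' where "w = App a' b' c'" "dbeta\<^sup>*\<^sup>* c c'" by blast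
          then show "\<not> pa w" using nc pa_App unfolding Neu_def by blast
        qed
        then show False using App.prems(2) by blast
      qed
      from App.IH(3)[OF npc this Mc] obtain c' where "safe c c'" by blast
      then show ?thesis using Fa Tb' by (blast intro: sright)
    qed
  qed
qed

lemma MP_safe: "safe s s' \<Longrightarrow> MP s' \<Longrightarrow> MP s"
proof -
  assume st: "safe s s'" and m: "MP s'"
  have "Typ s"
  proof -
    obtain \<Gamma> \<sigma> where "has_type \<Gamma> s' \<sigma>" using m unfolding MP_def Typ_def by blast
    from safe_exp[OF st this] show ?thesis unfolding Typ_def by blast
  qed
  moreover have "Flex s" if "Neu s"
  proof -
    have "Neu s'" using Neu_step[OF that safe_dbeta[OF st]] .
    then have f: "Flex s'" using m unfolding MP_def by blast
    show ?thesis unfolding Flex_def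
    proof
      fix \<sigma>
      obtain \<Gamma> where "has_type \<Gamma> s' \<sigma>" using f unfolding Flex_def by blast
      from safe_exp[OF st this] show "\<exists>\<Gamma>. has_type \<Gamma> s \<sigma>" .
    qed
  qed
  ultimately show ?thesis unfolding MP_def by blast
qed

lemma Typ_Lam: "Typ s \<Longrightarrow> Typ (Lam s)"
proof -
  assume "Typ s"
  then obtain \<Gamma> \<sigma> where "has_type \<Gamma> s \<sigma>" unfolding Typ_def by blast
  then have "has_type (econs (\<Gamma> 0) (del 0 \<Gamma>)) s \<sigma>" unfolding econs_eta .
  then have "has_type (del 0 \<Gamma>) (Lam s) (Arr (\<Gamma> 0) \<sigma>)" by (rule has_type_has_mtype.abs)
  then show ?thesis unfolding Typ_def by blast
qed

lemma Flex_Var: "Flex (Var x)"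
  unfolding Flex_def using has_type_has_mtype.var by blast

lemma main_acc:
  assumes "Wellfounded.accp (\<lambda>a b. dbeta b a) t" shows "\<forall>s. sub s t \<longrightarrow> MP s"
proof (rule accp_induct[where P = "\<lambda>t. \<forall>s. sub s t \<longrightarrow> MP s", OF assms])
  fix t
  assume acc: "Wellfounded.accp (\<lambda>a b. dbeta b a) t" and IH0: "\<forall>y. dbeta t y \<longrightarrow> (\<forall>s. sub s y \<longrightarrow> MP s)"
  have IH: "\<forall>s. sub s y \<longrightarrow> MP s" if "dbeta t y" for y using IH0 that by blast
  show "\<forall>s. sub s t \<longrightarrow> MP s"
  proof (intro allI)
    fix s
    show "sub s t \<longrightarrow> MP s"
    proof (induction s rule: measure_induct_rule[of size])
      case (less s)
      show ?case
      proof
        assume st: "sub s t"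
        have Mred: "MP s'" if ss: "dbeta s s'" for s'
        proof -
          obtain t' where "dbeta t t'" "sub s' t'" using sub_step[OF st ss] by blast
          then show ?thesis using IH by blast
        qed
        have Msub: "MP x" if "sub x s" "size x < size s" for x
          using less that sub_trans[OF st] by blast
        show "MP s"
        proof (cases s)
          case (Var x)
          then show ?thesis unfolding MP_def using Flex_Var Flex_Typ by blast
        next
          case (Lam s0)
          have "MP s0" using Msub[of s0] Lam by (auto intro: sub.intros)
          then have "Typ s" unfolding Lam MP_def using Typ_Lam by blast
          moreover have "\<not> Neu s" unfolding Lam Neu_def using pa_Lam by blast
          ultimately show ?thesis unfolding MP_def by blast
        next
          case (App a b c)
          have allsub: "\<forall>x. sub x a \<longrightarrow> MP x"
          proof (intro allI impI)
            fix x assume "sub x a"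
            then show "MP x" using Msub[of x] sub_size[of x a] App by (auto intro: sub.intros)
          qed
          have Ma: "MP a" using allsub sub_refl by blast
          have Mb: "MP b" using Msub[of b] App by (auto intro: sub.intros)
          have Mc: "MP c" using Msub[of c] App by (auto intro: sub.intros)
          show ?thesis
          proof (cases "pa a")
            case True
            then obtain D s1 where a: "a = plug D (Lam s1)" unfolding pa_def by blast
            have "Typ (plug D (Lam s1))" "Typ b" using Ma Mb a unfolding MP_def by auto
            then have "safe s (subst c 0 (plug D (subst s1 0 (shift (depth D) 0 b))))"
              unfolding App a by (rule sroot)
            then show ?thesis using MP_safe Mred safe_dbeta by blast
          next
            case False
            show ?thesis
            proof (cases "Neu a")
              case False2: False
              from exists_safe[OF False False2 allsub] obtain a' where "safe a a'" by blast
              then have "safe s (App a' b c)" unfolding App by (rule sleft)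
              then show ?thesis using MP_safe Mred safe_dbeta by blast
            next
              case True
              then have Fa: "Flex a" using Ma unfolding MP_def by blast
              have Tb: "Typ b" using Mb unfolding MP_def by blast
              obtain \<Gamma>c \<sigma>c where "has_type \<Gamma>c c \<sigma>c" using Mc unfolding MP_def Typ_def by blast
              then have "Typ s" unfolding App Typ_def using flex_app[OF Fa Tb] by blast
              moreover have "Flex s" if "Neu s"
              proof -
                have "Neu c" using that unfolding App by (rule Neu_App_right)
                then have Fc: "Flex c" using Mc unfolding MP_def by blast
                show ?thesis unfolding Flex_def
                proof
                  fix \<sigma>
                  obtain \<Gamma> where "has_type \<Gamma> c \<sigma>" using Fc unfolding Flex_def by blast
                  from flex_app[OF Fa Tb this] show "\<exists>\<Gamma>. has_type \<Gamma> s \<sigma>" unfolding App .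
                qed
              qed
              ultimately show ?thesis unfolding MP_def by blast
            qed
          qed
        qed
      qed
    qed
  qed
qed

lemma SN_accp: "SN_dbeta t \<Longrightarrow> Wellfounded.accp (\<lambda>a b. dbeta b a) t"
proof (rule ccontr)
  let ?R = "\<lambda>a b. dbeta b a"
  assume sn: "SN_dbeta t" and na: "\<not> Wellfounded.accp ?R t"
  have ex: "\<exists>y. dbeta x y \<and> \<not> Wellfounded.accp ?R y" if "\<not> Wellfounded.accp ?R x" for x
    using that by (meson accpI)
  define f where "f = rec_nat t (\<lambda>_ x. SOME y. dbeta x y \<and> \<not> Wellfounded.accp ?R y)"
  have f0: "f 0 = t" unfolding f_def by simp
  have fS: "f (Suc n) = (SOME y. dbeta (f n) y \<and> \<not> Wellfounded.accp ?R y)" for n unfolding f_def by simp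
  have na_all: "\<not> Wellfounded.accp ?R (f n)" for n
  proof (induction n)
    case 0 then show ?case using na f0 by simp
  next
    case (Suc n)
    from someI_ex[OF ex[OF Suc]] show ?case unfolding fS by blast
  qed
  have "dbeta (f n) (f (Suc n))" for n
    using someI_ex[OF ex[OF na_all[of n]]] unfolding fS by blast
  then show False using sn f0 unfolding SN_dbeta_def by blast
qed

theorem mainTheorem13:
  assumes "SN_dbeta t"
  shows "\<exists>\<Gamma> \<sigma>. has_type \<Gamma> t \<sigma>"
proof -
  have "MP t" using main_acc[OF SN_accp[OF assms]] sub_refl by blast
  then show ?thesis unfolding MP_def Typ_def by blast
qed


end
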